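(* Let $\mathcal A\in\mathbb Q^{n_1\times m\times n_3}$ and $\mathcal B\in\mathbb Q^{m\times n_2\times n_3}$. Then: (1) if $n_1=m$, then $\rho_{QT}(\mathcal A)\le \|\mathcal A\|_s$; (2) $\|\mathcal A*_Q\mathcal B\|_s\le \|\mathcal A\|_s\|\mathcal B\|_s$; (3) $(\mathcal A*_Q\mathcal B)^*=\mathcal B^**_Q\mathcal A^*$; (4) $(\mathcal A*_Q\mathcal B)*_Q\mathcal C=\mathcal A*_Q(\mathcal B*_Q\mathcal C)$ for every $\mathcal C\in\mathbb Q^{n_2\times n\times n_3}$; (5) $\mathcal A*_Q(\mathcal B+\mathcal C)=\mathcal A*_Q\mathcal B+\mathcal A*_Q\mathcal C$ for every $\mathcal C\in\mathbb Q^{m\times n_2\times n_3}$.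
   Context: $\mathbb Q$ denotes the real quaternions $a=a_0+a_1\mathbf i+a_2\mathbf j+a_3\mathbf k$ ($a_t\in\mathbb R$, $\mathbf i^2=\mathbf j^2=\mathbf k^2=-1$, $\mathbf{ij}=\mathbf k=-\mathbf{ji}$, $\mathbf{jk}=\mathbf i=-\mathbf{kj}$, $\mathbf{ki}=\mathbf j=-\mathbf{ik}$), with conjugate $a^*=a_0-a_1\mathbf i-a_2\mathbf j-a_3\mathbf k$ and $|a|=\sqrt{a^*a}$; $\mathbb C$ is identified with $\{a_0+a_1\mathbf i\}$. Every quaternion array $A=A_0+A_1\mathbf i+A_2\mathbf j+A_3\mathbf k$ (real $A_t$) is written uniquely as $A=A_{\mathbf d}+\mathbf jA_{\mathbf c}$ with $A_{\mathbf d}=A_0+A_1\mathbf i$, $A_{\mathbf c}=A_2-A_3\mathbf i$ complex. For a tensor $\mathcal A\in\mathbb Q^{n_1\times n_2\times n_3}$, $\mathcal A^{(s)}$ is its $s$-th frontal slice $\mathcal A(:,:,s)$. For a complex tensor $\mathcal C\in\mathbb C^{n_1\times n_2\times n_3}$, $\mathtt{bcirc}(\mathcal C)\in\mathbb C^{n_1n_3\times n_2n_3}$ is the block circulant matrix whose $(p,q)$ block ($1\le p,q\le n_3$) is $\mathcal C^{(((p-q)\bmod n_3)+1)}$. $P_{n_3}$ is the $n_3\times n_3$ permutation matrix whose first row is $e_1^T$ and whose $r$-th row, $r\ge2$, is $e_{n_3+2-r}^T$. The $z$-block circulant matrix of $\mathcal A=\mathcal A_{\mathbf d}+\mathbf j\mathcal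 A_{\mathbf c}$ is $\mathtt{bcirc_z}(\mathcal A)=\mathtt{bcirc}(\mathcal A_{\mathbf d})+\mathbf j\,\mathtt{bcirc}(\mathcal A_{\mathbf c})(P_{n_3}\otimes I_{n_2})\in\mathbb Q^{n_1n_3\times n_2n_3}$. $\mathtt{unfold}(\mathcal B)=[\mathcal B^{(1)};\dots;\mathcal B^{(n_3)}]$ (block column) and $\mathtt{fold}$ is its inverse. The QT-product of $\mathcal A\in\mathbb Q^{n_1\times r\times n_3}$ and $\mathcal B\in\mathbb Q^{r\times n_2\times n_3}$ is $\mathcal A*_Q\mathcal B=\mathtt{fold}(\mathtt{bcirc_z}(\mathcal A)\,\mathtt{unfold}(\mathcal B))\in\mathbb Q^{n_1\times n_2\times n_3}$. For a complex tensor $\mathcal C\in\mathbb C^{n_1\times n_2\times n_3}$, $\mathcal C^*\in\mathbb C^{n_2\times n_1\times n_3}$ has frontal slices $(\mathcal C^{(1)})^*$ and $(\mathcal C^* )^{(s)}=(\mathcal C^{(n_3+2-s)})^*$ for $s\ge2$. The conjugate transpose of $\mathcal A=\mathcal A_{\mathbf d}+\mathbf j\mathcal A_{\mathbf c}\in\mathbb Q^{n_1\times n_2\times n_3}$ is the tensor $\mathcal A^*\in\mathbb Q^{n_2\times n_1\times n_3}$ with $\mathtt{unfold}(\mathcal A^* )=\mathtt{unfold}(\mathcal A_{\mathbf d}^* )-(P_{n_3}\otimes I_{n_2})\mathtt{unfold}(\mathcal A_{\mathbf c}^* )\mathbf j$. For a quaternion matrix $M$, $\|M\|_2=\max_{\|x\|=1}\|Mx\|$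 (Euclidean norm $\|x\|=(\sum|x_i|^2)^{1/2}$ on quaternion vectors); a right eigenvalue of a square $M$ is $\lambda\in\mathbb Q$ with $Mx=x\lambda$ for some $x\ne0$, and $\rho(M)$ is the maximum of $|\lambda|$ over right eigenvalues. QT-spectral norm: $\|\mathcal A\|_s=\|\mathtt{bcirc_z}(\mathcal A)\|_2$; QT-spectral radius (square frontal slices): $\rho_{QT}(\mathcal A)=\rho(\mathtt{bcirc_z}(\mathcal A))$. *)

theory Defs
  imports "HOL-Analysis.Analysis"
begin

datatype quat = Quat (qre: real) (qi: real) (qj_c: real) (qk: real)

instantiation quat :: ring_1
begin
definition "0 = Quat 0 0 0 0"
definition "1 = Quat 1 0 0 0"
definition "a + b = Quat (qre a + qre b) (qi a + qi b) (qj_c a + qj_c b) (qk a + qk b)"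
definition "a - b = Quat (qre a - qre b) (qi a - qi b) (qj_c a - qj_c b) (qk a - qk b)"
definition "- a = Quat (- qre a) (- qi a) (- qj_c a) (- qk a)"
text \<open>Hamilton product (ij = k, jk = i, ki = j, i^2 = j^2 = k^2 = -1).\<close>
definition "a * b = Quat
   (qre a * qre b - qi a * qi b - qj_c a * qj_c b - qk a * qk b)
   (qre a * qi b + qi a * qre b + qj_c a * qk b - qk a * qj_c b)
   (qre a * qj_c b - qi a * qk b + qj_c a * qre b + qk a * qi b)
   (qre a * qk b + qi a * qj_c b - qj_c a * qi b + qk a * qre b)"
instance
  by standard (auto simp: zero_quat_def one_quat_def plus_quat_def minus_quat_def
      uminus_quat_def times_quat_def algebra_simps intro: quat.expand)
end

definition qconj :: "quat \<Rightarrow> quat" where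
  "qconj a = Quat (qre a) (- qi a) (- qj_c a) (- qk a)"

definition qabs :: "quat \<Rightarrow> real" where
  "qabs a = sqrt ((qre a)\<^sup>2 + (qi a)\<^sup>2 + (qj_c a)\<^sup>2 + (qk a)\<^sup>2)"

definition of_cplx :: "complex \<Rightarrow> quat" where
  "of_cplx z = Quat (Re z) (Im z) 0 0"

definition qunit_j :: quat where "qunit_j = Quat 0 0 1 0"

text \<open>a = a_d + j a_c with a_d = a0 + a1 i, a_c = a2 - a3 i.\<close>
definition qdpart :: "quat \<Rightarrow> complex" where "qdpart a = Complex (qre a) (qi a)"
definition qcpart :: "quat \<Rightarrow> complex" where "qcpart a = Complex (qj_c a) (- qk a)"

section \<open>Matrices and tensors (0-based indices, explicit dimensions)\<close>

type_synonym 'a mat = "nat \<Rightarrow> nat \<Rightarrow> 'a"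
type_synonym 'a tens = "nat \<Rightarrow> nat \<Rightarrow> nat \<Rightarrow> 'a"

definition mmul :: "nat \<Rightarrow> ('a::semiring_0) mat \<Rightarrow> 'a mat \<Rightarrow> 'a mat" where
  "mmul k M N = (\<lambda>i j. \<Sum>l<k. M i l * N l j)"

definition idm :: "('a::{zero,one}) mat" where
  "idm = (\<lambda>i j. if i = j then 1 else 0)"

definition kron :: "nat \<Rightarrow> nat \<Rightarrow> ('a::times) mat \<Rightarrow> 'a mat \<Rightarrow> 'a mat" where
  "kron p q P Q = (\<lambda>r c. P (r div p) (c div q) * Q (r mod p) (c mod q))"

text \<open>P_{n3}: row 1 is e_1^T, row r >= 2 is e_{n3+2-r}^T; 0-based: row r is e_{(n3-r) mod n3}.\<close>
definition Pmat :: "nat \<Rightarrow> ('a::{zero,one}) mat" where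
  "Pmat n3 = (\<lambda>r c. if c = (n3 - r) mod n3 then 1 else 0)"

definition bcirc :: "nat \<Rightarrow> nat \<Rightarrow> nat \<Rightarrow> complex tens \<Rightarrow> complex mat" where
  "bcirc n1 n2 n3 C = (\<lambda>r c. C (r mod n1) (c mod n2) ((r div n1 + n3 - c div n2) mod n3))"

definition tdpart :: "quat tens \<Rightarrow> complex tens" where
  "tdpart A = (\<lambda>i j s. qdpart (A i j s))"
definition tcpart :: "quat tens \<Rightarrow> complex tens" where
  "tcpart A = (\<lambda>i j s. qcpart (A i j s))"

definition bcirc_z :: "nat \<Rightarrow> nat \<Rightarrow> nat \<Rightarrow> quat tens \<Rightarrow> quat mat" where
  "bcirc_z n1 n2 n3 A = (\<lambda>r c.
      of_cplx (bcirc n1 n2 n3 (tdpart A) r c)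
    + qunit_j * of_cplx (mmul (n2 * n3) (bcirc n1 n2 n3 (tcpart A)) (kron n2 n2 (Pmat n3) idm) r c))"

text \<open>unfold(B) = [B^(1); ...; B^(n3)] for B with n1 rows; fold is its inverse.\<close>
definition tunfold :: "nat \<Rightarrow> 'a tens \<Rightarrow> 'a mat" where
  "tunfold n1 B = (\<lambda>r c. B (r mod n1) c (r div n1))"
definition tfold :: "nat \<Rightarrow> 'a mat \<Rightarrow> 'a tens" where
  "tfold n1 M = (\<lambda>i j s. M (s * n1 + i) j)"

definition qtprod :: "nat \<Rightarrow> nat \<Rightarrow> nat \<Rightarrow> nat \<Rightarrow> quat tens \<Rightarrow> quat tens \<Rightarrow> quat tens" where
  "qtprod n1 r n2 n3 A B = tfold n1 (mmul (r * n3) (bcirc_z n1 r n3 A) (tunfold r B))"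

definition ctconjT :: "nat \<Rightarrow> complex tens \<Rightarrow> complex tens" where
  "ctconjT n3 C = (\<lambda>i j s. cnj (C j i ((n3 - s) mod n3)))"

definition qtconjT :: "nat \<Rightarrow> nat \<Rightarrow> quat tens \<Rightarrow> quat tens" where
  "qtconjT n2 n3 A = tfold n2 (\<lambda>r c.
      of_cplx (tunfold n2 (ctconjT n3 (tdpart A)) r c)
    - of_cplx (mmul (n2 * n3) (kron n2 n2 (Pmat n3) idm) (tunfold n2 (ctconjT n3 (tcpart A))) r c)
      * qunit_j)"

definition mvmul :: "nat \<Rightarrow> quat mat \<Rightarrow> (nat \<Rightarrow> quat) \<Rightarrow> nat \<Rightarrow> quat" where
  "mvmul n M x = (\<lambda>i. \<Sum>l<n. M i l * x l)"

definition vnorm :: "nat \<Rightarrow> (nat \<Rightarrow> quat) \<Rightarrow> real" where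
  "vnorm n x = sqrt (\<Sum>i<n. (qabs (x i))\<^sup>2)"

definition spec_norm :: "nat \<Rightarrow> nat \<Rightarrow> quat mat \<Rightarrow> real" where
  "spec_norm m n M = Sup {vnorm m (mvmul n M x) | x. vnorm n x = 1}"

definition right_eigenvalue :: "nat \<Rightarrow> quat mat \<Rightarrow> quat \<Rightarrow> bool" where
  "right_eigenvalue n M lam \<longleftrightarrow>
     (\<exists>x. (\<exists>i<n. x i \<noteq> 0) \<and> (\<forall>i<n. mvmul n M x i = x i * lam))"

definition spec_radius :: "nat \<Rightarrow> quat mat \<Rightarrow> real" where
  "spec_radius n M = Sup {qabs lam | lam. right_eigenvalue n M lam}"

definition qt_norm :: "nat \<Rightarrow> nat \<Rightarrow> nat \<Rightarrow> quat tens \<Rightarrow> real" where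
  "qt_norm n1 n2 n3 A = spec_norm (n1 * n3) (n2 * n3) (bcirc_z n1 n2 n3 A)"

definition qt_radius :: "nat \<Rightarrow> nat \<Rightarrow> quat tens \<Rightarrow> real" where
  "qt_radius n n3 A = spec_radius (n * n3) (bcirc_z n n n3 A)"

end

theory Submission
  imports Defs "Jordan_Normal_Form.Spectral_Radius"
begin


lemma quat_eqI: "qre a = qre b \<Longrightarrow> qi a = qi b \<Longrightarrow> qj_c a = qj_c b \<Longrightarrow> qk a = qk b \<Longrightarrow> a = b"
  by (cases a; cases b) auto

lemma quat_sel_simps[simp]:
  "qre 0 = 0" "qi 0 = 0" "qj_c 0 = 0" "qk 0 = 0"
  "qre (a + b) = qre a + qre b" "qi (a + b) = qi a + qi b" "qj_c (a + b) = qj_c a + qj_c b" "qk (a + b) = qk a + qk b"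
  "qre (a - b) = qre a - qre b" "qi (a - b) = qi a - qi b" "qj_c (a - b) = qj_c a - qj_c b" "qk (a - b) = qk a - qk b"
  "qre (- a) = - qre a" "qi (- a) = - qi a" "qj_c (- a) = - qj_c a" "qk (- a) = - qk a"
  by (simp_all add: zero_quat_def plus_quat_def minus_quat_def uminus_quat_def)

lemma quat_mult_sel[simp]:
  "qre (a * b) = qre a * qre b - qi a * qi b - qj_c a * qj_c b - qk a * qk b"
  "qi (a * b) = qre a * qi b + qi a * qre b + qj_c a * qk b - qk a * qj_c b"
  "qj_c (a * b) = qre a * qj_c b - qi a * qk b + qj_c a * qre b + qk a * qi b"
  "qk (a * b) = qre a * qk b + qi a * qj_c b - qj_c a * qi b + qk a * qre b"
  by (simp_all add: times_quat_def)

lemma quat_sum_sel[simp]: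
  "qre (sum f A) = (\<Sum>x\<in>A. qre (f x))" "qi (sum f A) = (\<Sum>x\<in>A. qi (f x))"
  "qj_c (sum f A) = (\<Sum>x\<in>A. qj_c (f x))" "qk (sum f A) = (\<Sum>x\<in>A. qk (f x))"
  by (induction A rule: infinite_finite_induct; simp)+

definition Dq :: "quat \<Rightarrow> quat" where "Dq a = Quat (qre a) (qi a) 0 0"
definition Cq :: "quat \<Rightarrow> quat" where "Cq a = Quat 0 0 (qj_c a) (qk a)"

lemma Dq_sel[simp]: "qre (Dq a) = qre a" "qi (Dq a) = qi a" "qj_c (Dq a) = 0" "qk (Dq a) = 0"
  by (simp_all add: Dq_def)
lemma Cq_sel[simp]: "qre (Cq a) = 0" "qi (Cq a) = 0" "qj_c (Cq a) = qj_c a" "qk (Cq a) = qk a"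
  by (simp_all add: Cq_def)

lemma DC_split: "Dq a + Cq a = a" by (rule quat_eqI) simp_all

lemma Dq_add: "Dq (a + b) = Dq a + Dq b" and Cq_add: "Cq (a + b) = Cq a + Cq b"
  by (rule quat_eqI; simp)+
lemma Dq_sum: "Dq (sum f A) = (\<Sum>x\<in>A. Dq (f x))" and Cq_sum: "Cq (sum f A) = (\<Sum>x\<in>A. Cq (f x))"
  by (rule quat_eqI; simp)+

lemma Dq_mult: "Dq (a * b) = Dq a * Dq b + Cq a * Cq b"
  and Cq_mult: "Cq (a * b) = Dq a * Cq b + Cq a * Dq b"
  by (rule quat_eqI; simp)+

lemma DD[simp]: "Dq (Dq a) = Dq a" and DC[simp]: "Dq (Cq a) = 0" and CD[simp]: "Cq (Dq a) = 0" and CC[simp]: "Cq (Cq a) = Cq a"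
  by (rule quat_eqI; simp)+

lemma bz_entry_q: "of_cplx (qdpart a) = Dq a" "qunit_j * of_cplx (qcpart a) = Cq a"
  by (rule quat_eqI; simp add: of_cplx_def qdpart_def qcpart_def qunit_j_def)+

lemma conj_entry_q: "of_cplx (cnj (qdpart a)) = Dq (qconj a)" "of_cplx (cnj (qcpart a)) * qunit_j = - Cq (qconj a)"
  by (rule quat_eqI; simp add: of_cplx_def qdpart_def qcpart_def qunit_j_def qconj_def)+

lemma qconj_sel[simp]: "qre (qconj a) = qre a" "qi (qconj a) = - qi a" "qj_c (qconj a) = - qj_c a" "qk (qconj a) = - qk a"
  by (simp_all add: qconj_def)

lemma qconj_zero[simp]: "qconj 0 = 0" by (rule quat_eqI) simp_all

lemma qconj_add: "qconj (a + b) = qconj a + qconj b" and qconj_mult: "qconj (a * b) = qconj b * qconj a"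
  and qconj_sum: "qconj (sum f A) = (\<Sum>x\<in>A. qconj (f x))"
  by (rule quat_eqI; simp add: algebra_simps sum_negf)+

lemma Dq_conj: "Dq (qconj a) = qconj (Dq a)" and Cq_conj: "Cq (qconj a) = qconj (Cq a)"
  by (rule quat_eqI; simp)+



definition sl :: "nat \<Rightarrow> int \<Rightarrow> nat" where "sl n z = nat (z mod int n)"

lemma int_sl: "0 < n \<Longrightarrow> int (sl n z) = z mod int n"
  by (simp add: sl_def)
lemma sl_lt: "0 < n \<Longrightarrow> sl n z < n"
  unfolding sl_def by (simp add: nat_less_iff)
lemma sl_int: "u < n \<Longrightarrow> sl n (int u) = u"
  unfolding sl_def by (simp add: zmod_int[symmetric])
lemma sl_eqI: "z mod int n = w mod int n \<Longrightarrow> sl n z = sl n w"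
  unfolding sl_def by simp

lemma sl_nat_diff: "q \<le> n3 \<Longrightarrow> (p + n3 - q) mod n3 = sl n3 (int p - int q)"
proof -
  assume q: "q \<le> n3"
  have "int ((p + n3 - q) mod n3) = (int p + int n3 - int q) mod int n3"
    using q by (simp add: zmod_int of_nat_diff)
  also have "(int p + int n3 - int q) mod int n3 = ((int p - int q) + int n3) mod int n3" by (simp add: algebra_simps)
  also have "\<dots> = (int p - int q) mod int n3" by simp
  finally show ?thesis unfolding sl_def by simp
qed

lemma rev_mod_iff: "(a::nat) < n \<Longrightarrow> b < n \<Longrightarrow> (b = (n - a) mod n) \<longleftrightarrow> (a = (n - b) mod n)"
  by (cases "a = 0"; cases "b = 0") (auto simp: mod_if)

lemma sum_single:
  assumes "l0 \<in> A" "finite A" "\<And>l. l \<in> A \<Longrightarrow> l \<noteq> l0 \<Longrightarrow> f l = 0"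
  shows "sum f A = f l0"
  using assms by (simp add: sum.remove)

lemma bcirc_z_entry:
  assumes n2: "0 < n2" and n3: "0 < n3" and c: "c < n2 * n3"
  shows "bcirc_z n1 n2 n3 A r c =
     Dq (A (r mod n1) (c mod n2) (sl n3 (int (r div n1) - int (c div n2))))
   + Cq (A (r mod n1) (c mod n2) (sl n3 (int (r div n1) + int (c div n2))))"
proof -
  define q where "q = c div n2"
  define j where "j = c mod n2"
  have q3: "q < n3" using c unfolding q_def by (simp add: less_mult_imp_div_less mult.commute)
  have j2: "j < n2" using n2 unfolding j_def by simp
  define ld where "ld = (n3 - q) mod n3"
  have ld3: "ld < n3" using n3 unfolding ld_def by simp
  define l0 where "l0 = ld * n2 + j"
  have l0r: "l0 < n2 * n3"
  proof -
    have "l0 < ld * n2 + n2" using j2 unfolding l0_def by simp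
    also have "\<dots> = (ld + 1) * n2" by simp
    also have "\<dots> \<le> n3 * n2" using ld3 by (intro mult_right_mono) auto
    finally show ?thesis by (simp add: mult.commute)
  qed
  have l0d: "l0 div n2 = ld" and l0m: "l0 mod n2 = j" using j2 unfolding l0_def by auto
  have part1: "of_cplx (bcirc n1 n2 n3 (tdpart A) r c) = Dq (A (r mod n1) (c mod n2) (sl n3 (int (r div n1) - int (c div n2))))"
    unfolding bcirc_def tdpart_def bz_entry_q(1)[symmetric]
    using q3 by (simp add: sl_nat_diff q_def)
  have "mmul (n2 * n3) (bcirc n1 n2 n3 (tcpart A)) (kron n2 n2 (Pmat n3) idm) r c
      = bcirc n1 n2 n3 (tcpart A) r l0"
    unfolding mmul_def
  proof (subst sum_single[of l0])
    show "l0 \<in> {..<n2 * n3}" using l0r by simp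
    show "finite {..<n2 * n3}" by simp
    fix l assume l: "l \<in> {..<n2 * n3}" "l \<noteq> l0"
    have ldl: "l div n2 < n3" using l by (simp add: less_mult_imp_div_less mult.commute)
    have "\<not> (c div n2 = (n3 - l div n2) mod n3 \<and> l mod n2 = c mod n2)"
    proof
      assume h: "c div n2 = (n3 - l div n2) mod n3 \<and> l mod n2 = c mod n2"
      then have "l div n2 = ld" using rev_mod_iff[OF ldl q3] unfolding ld_def q_def by auto
      moreover have "l mod n2 = j" using h unfolding j_def by simp
      ultimately have "l = l0" unfolding l0_def by (metis div_mult_mod_eq)
      then show False using l by simp
    qed
    then show "bcirc n1 n2 n3 (tcpart A) r l * kron n2 n2 (Pmat n3) idm l c = 0"
      unfolding kron_def Pmat_def idm_def by auto
  next
    have "c div n2 = (n3 - l0 div n2) mod n3"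
      using rev_mod_iff[OF ld3 q3] unfolding l0d ld_def q_def by simp
    then show "bcirc n1 n2 n3 (tcpart A) r l0 * kron n2 n2 (Pmat n3) idm l0 c = bcirc n1 n2 n3 (tcpart A) r l0"
      unfolding kron_def Pmat_def idm_def using l0m j_def by simp
  qed
  also have "\<dots> = qcpart (A (r mod n1) (c mod n2) (sl n3 (int (r div n1) + int (c div n2))))"
  proof -
    have "(r div n1 + n3 - ld) mod n3 = sl n3 (int (r div n1) + int (c div n2))"
    proof -
      have "(r div n1 + n3 - ld) mod n3 = sl n3 (int (r div n1) - int ld)"
        using ld3 by (simp add: sl_nat_diff)
      also have "\<dots> = sl n3 (int (r div n1) + int q)"
      proof (rule sl_eqI)
        have "int ld = (int n3 - int q) mod int n3" unfolding ld_def using q3 by (simp add: zmod_int of_nat_diff)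
        then have "int ld mod int n3 = (- int q) mod int n3" by (simp add: mod_diff_left_eq[symmetric])
        then show "(int (r div n1) - int ld) mod int n3 = (int (r div n1) + int q) mod int n3"
          by (metis diff_minus_eq_add mod_diff_cong)
      qed
      finally show ?thesis unfolding q_def .
    qed
    then show ?thesis unfolding bcirc_def tcpart_def l0d l0m j_def by simp
  qed
  finally show ?thesis unfolding bcirc_z_def part1 bz_entry_q(2)[symmetric] by simp
qed



lemma sum_split: fixes m n :: nat shows "(\<Sum>l<m*n. g l) = (\<Sum>u<n. \<Sum>k<m. g (u*m + k))"
proof -
  have "(\<Sum>l<m*n. g l) = (\<Sum>u<n. sum g {u*m..<u*m+m})"
    using sum.nat_group[of g m n] by (simp add: mult.commute)
  also have "\<dots> = (\<Sum>u<n. \<Sum>k<m. g (u*m + k))"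
  proof (rule sum.cong[OF refl])
    fix u
    show "sum g {u*m..<u*m+m} = (\<Sum>k<m. g (u*m + k))"
      using sum.shift_bounds_nat_ivl[of g 0 "u*m" m] by (simp add: atLeast0LessThan add.commute)
  qed
  finally show ?thesis .
qed

lemma sl_red:
  assumes "0 < n"
  shows "sl n (a - int (sl n b)) = sl n (a - b)" "sl n (int (sl n a) - b) = sl n (a - b)"
    "sl n (int (sl n a) + b) = sl n (a + b)" "sl n (a + int (sl n b)) = sl n (a + b)"
    "sl n (int (sl n a)) = sl n a" "sl n (- int (sl n a)) = sl n (- a)"
  using assms by (simp_all add: sl_def mod_simps nat_mod_as_int)

lemma sum_rot: assumes "0 < n" shows "(\<Sum>u<n. f u) = (\<Sum>t<n. f (sl n (int t + c)))"
proof (rule sum.reindex_bij_witness[where j="\<lambda>u. sl n (int u - c)" and i="\<lambda>t. sl n (int t + c)"])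
  fix a assume "a \<in> {..<n}"
  then show "sl n (int (sl n (int a + c)) - c) = a" 
    using assms by (auto simp: sl_def mod_simps nat_mod_as_int)
  show "sl n (int a + c) \<in> {..<n}" using assms sl_lt by auto
next
  fix a assume "a \<in> {..<n}"
  then show "sl n (int (sl n (int a - c)) + c) = a" 
    using assms by (auto simp: sl_def mod_simps nat_mod_as_int)
  show "sl n (int a - c) \<in> {..<n}" using assms sl_lt by auto
qed (use assms in \<open>auto simp: sl_def mod_simps nat_mod_as_int\<close>)



lemma idx_lt: fixes u k m n3 :: nat shows "u < n3 \<Longrightarrow> k < m \<Longrightarrow> u*m+k < m*n3"
proof -
  assume "u < n3" "k < m"
  then have "u*m+k < (u+1)*m" by simp
  also have "\<dots> \<le> n3*m" using \<open>u < n3\<close> by (intro mult_right_mono) auto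
  finally show ?thesis by (simp add: mult.commute)
qed

lemma idx_divmod: fixes u k m :: nat shows "k < m \<Longrightarrow> (u*m+k) div m = u \<and> (u*m+k) mod m = k"
  by auto

lemma prod_entry:
  assumes m: "0 < m" and n3: "0 < n3" and i: "i < n1"
  shows "qtprod n1 m n2 n3 A B i j s = (\<Sum>u<n3. \<Sum>k<m.
     (Dq (A i k (sl n3 (int s - int u))) + Cq (A i k (sl n3 (int s + int u)))) * B k j u)"
proof -
  have "qtprod n1 m n2 n3 A B i j s = (\<Sum>l<m*n3. bcirc_z n1 m n3 A (s*n1+i) l * B (l mod m) j (l div m))"
    unfolding qtprod_def tfold_def mmul_def tunfold_def by simp
  also have "\<dots> = (\<Sum>u<n3. \<Sum>k<m. bcirc_z n1 m n3 A (s*n1+i) (u*m+k) * B ((u*m+k) mod m) j ((u*m+k) div m))"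
    by (rule sum_split)
  also have "\<dots> = (\<Sum>u<n3. \<Sum>k<m.
     (Dq (A i k (sl n3 (int s - int u))) + Cq (A i k (sl n3 (int s + int u)))) * B k j u)"
  proof (intro sum.cong refl)
    fix u k assume "u \<in> {..<n3}" "k \<in> {..<m}"
    then have uk: "u < n3" "k < m" by auto
    show "bcirc_z n1 m n3 A (s*n1+i) (u*m+k) * B ((u*m+k) mod m) j ((u*m+k) div m)
        = (Dq (A i k (sl n3 (int s - int u))) + Cq (A i k (sl n3 (int s + int u)))) * B k j u"
      using bcirc_z_entry[OF m n3 idx_lt[OF uk], of n1 A "s*n1+i"] idx_divmod[OF uk(2), of u] i
      by simp
  qed
  finally show ?thesis .
qed

lemma bcz_prod:
  assumes n1: "0 < n1" and m: "0 < m" and n2: "0 < n2" and n3: "0 < n3"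
    and r: "r < n1*n3" and c: "c < n2*n3"
  shows "bcirc_z n1 n2 n3 (qtprod n1 m n2 n3 A B) r c = mmul (m*n3) (bcirc_z n1 m n3 A) (bcirc_z m n2 n3 B) r c"
proof -
  define i p j q where "i = r mod n1" and "p = int (r div n1)" and "j = c mod n2" and "q = int (c div n2)"
  have i1: "i < n1" using n1 i_def by simp
  let ?sl = "sl n3"
  define a1 where "a1 k u = A i k (?sl (p - int u))" for k u
  define a2 where "a2 k u = A i k (?sl (p + int u))" for k u
  define b1 where "b1 k u = B k j (?sl (int u - q))" for k u
  define b2 where "b2 k u = B k j (?sl (int u + q))" for k u
  have rhs: "mmul (m*n3) (bcirc_z n1 m n3 A) (bcirc_z m n2 n3 B) r c
     = (\<Sum>u<n3. \<Sum>k<m. (Dq (a1 k u) + Cq (a2 k u)) * (Dq (b1 k u) + Cq (b2 k u)))"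
    unfolding mmul_def
  proof (subst sum_split, intro sum.cong refl)
    fix u k assume "u \<in> {..<n3}" "k \<in> {..<m}"
    then have uk: "u < n3" "k < m" by auto
    show "bcirc_z n1 m n3 A r (u*m+k) * bcirc_z m n2 n3 B (u*m+k) c
       = (Dq (a1 k u) + Cq (a2 k u)) * (Dq (b1 k u) + Cq (b2 k u))"
      using bcirc_z_entry[OF m n3 idx_lt[OF uk], of n1 A r] bcirc_z_entry[OF n2 n3 c, of m B "u*m+k"]
        idx_divmod[OF uk(2), of u]
      unfolding a1_def a2_def b1_def b2_def i_def j_def p_def q_def by simp
  qed
  define s1 where "s1 = ?sl (p - q)"
  define s2 where "s2 = ?sl (p + q)"
  have lhs: "bcirc_z n1 n2 n3 (qtprod n1 m n2 n3 A B) r c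
     = Dq (qtprod n1 m n2 n3 A B i j s1) + Cq (qtprod n1 m n2 n3 A B i j s2)"
    using bcirc_z_entry[OF n2 n3 c] unfolding i_def j_def p_def q_def s1_def s2_def by simp
  have e1: "Dq (qtprod n1 m n2 n3 A B i j s1) =
     (\<Sum>u<n3. \<Sum>k<m. Dq (a1 k u) * Dq (b1 k u)) + (\<Sum>u<n3. \<Sum>k<m. Cq (a2 k u) * Cq (b2 k u))"
  proof -
    have "Dq (qtprod n1 m n2 n3 A B i j s1) = (\<Sum>t<n3. \<Sum>k<m. Dq (A i k (?sl (int s1 - int t))) * Dq (B k j t))
      + (\<Sum>t<n3. \<Sum>k<m. Cq (A i k (?sl (int s1 + int t))) * Cq (B k j t))"
      unfolding prod_entry[OF m n3 i1] by (simp add: Dq_sum Dq_mult Dq_add Cq_add sum.distrib)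
    also have "(\<Sum>t<n3. \<Sum>k<m. Dq (A i k (?sl (int s1 - int t))) * Dq (B k j t))
       = (\<Sum>u<n3. \<Sum>k<m. Dq (a1 k u) * Dq (b1 k u))"
      apply (subst sum_rot[OF n3, of _ "-q"])
      apply (intro sum.cong refl)
      using n3 by (simp add: a1_def b1_def s1_def sl_red sl_int; simp add: algebra_simps)
    also have "(\<Sum>t<n3. \<Sum>k<m. Cq (A i k (?sl (int s1 + int t))) * Cq (B k j t))
       = (\<Sum>u<n3. \<Sum>k<m. Cq (a2 k u) * Cq (b2 k u))"
      apply (subst sum_rot[OF n3, of _ q])
      apply (intro sum.cong refl)
      using n3 by (simp add: a2_def b2_def s1_def sl_red sl_int; simp add: algebra_simps)
    finally show ?thesis .
  qed
  have e2: "Cq (qtprod n1 m n2 n3 A B i j s2) =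
     (\<Sum>u<n3. \<Sum>k<m. Dq (a1 k u) * Cq (b2 k u)) + (\<Sum>u<n3. \<Sum>k<m. Cq (a2 k u) * Dq (b1 k u))"
  proof -
    have "Cq (qtprod n1 m n2 n3 A B i j s2) = (\<Sum>t<n3. \<Sum>k<m. Dq (A i k (?sl (int s2 - int t))) * Cq (B k j t))
      + (\<Sum>t<n3. \<Sum>k<m. Cq (A i k (?sl (int s2 + int t))) * Dq (B k j t))"
      unfolding prod_entry[OF m n3 i1] by (simp add: Cq_sum Cq_mult Dq_add Cq_add sum.distrib)
    also have "(\<Sum>t<n3. \<Sum>k<m. Dq (A i k (?sl (int s2 - int t))) * Cq (B k j t))
       = (\<Sum>u<n3. \<Sum>k<m. Dq (a1 k u) * Cq (b2 k u))"
      apply (subst sum_rot[OF n3, of _ q])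
      apply (intro sum.cong refl)
      using n3 by (simp add: a1_def b2_def s2_def sl_red sl_int; simp add: algebra_simps)
    also have "(\<Sum>t<n3. \<Sum>k<m. Cq (A i k (?sl (int s2 + int t))) * Dq (B k j t))
       = (\<Sum>u<n3. \<Sum>k<m. Cq (a2 k u) * Dq (b1 k u))"
      apply (subst sum_rot[OF n3, of _ "-q"])
      apply (intro sum.cong refl)
      using n3 by (simp add: a2_def b1_def s2_def sl_red sl_int; simp add: algebra_simps)
    finally show ?thesis .
  qed
  show ?thesis unfolding lhs rhs e1 e2
    by (simp add: distrib_left distrib_right sum.distrib algebra_simps)
qed



lemma conj_entry:
  assumes b: "0 < b" and n3: "0 < n3" and i: "i < b" and s: "s < n3"
  shows "qtconjT b n3 X i j s = Dq (qconj (X j i (sl n3 (- int s)))) + Cq (qconj (X j i s))"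
proof -
  define ld where "ld = (n3 - s) mod n3"
  have ld3: "ld < n3" using n3 unfolding ld_def by simp
  define l0 where "l0 = ld * b + i"
  have l0r: "l0 < b * n3" unfolding l0_def using idx_lt[OF ld3 i] .
  have l0d: "l0 div b = ld" and l0m: "l0 mod b = i" using i unfolding l0_def by auto
  have r: "(s * b + i) div b = s" "(s * b + i) mod b = i" using i by auto
  have "mmul (b * n3) (kron b b (Pmat n3) idm) (tunfold b (ctconjT n3 (tcpart X))) (s * b + i) j
      = tunfold b (ctconjT n3 (tcpart X)) l0 j"
    unfolding mmul_def
  proof (subst sum_single[of l0])
    show "l0 \<in> {..<b * n3}" using l0r by simp
    show "finite {..<b * n3}" by simp
    fix l assume l: "l \<in> {..<b * n3}" "l \<noteq> l0"
    have "\<not> (l div b = (n3 - s) mod n3 \<and> l mod b = i)"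
    proof
      assume h: "l div b = (n3 - s) mod n3 \<and> l mod b = i"
      then have "l = l0" unfolding l0_def ld_def by (metis div_mult_mod_eq)
      then show False using l by simp
    qed
    then show "kron b b (Pmat n3) idm (s * b + i) l * tunfold b (ctconjT n3 (tcpart X)) l j = 0"
      unfolding kron_def Pmat_def idm_def r by auto
  next
    show "kron b b (Pmat n3) idm (s * b + i) l0 * tunfold b (ctconjT n3 (tcpart X)) l0 j = tunfold b (ctconjT n3 (tcpart X)) l0 j"
      unfolding kron_def Pmat_def idm_def r l0d l0m ld_def by simp
  qed
  also have "\<dots> = cnj (qcpart (X j i s))"
  proof -
    have "(n3 - ld) mod n3 = s" unfolding ld_def using s by (cases "s = 0") (auto simp: mod_if)
    then show ?thesis unfolding tunfold_def ctconjT_def tcpart_def l0d l0m by simp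
  qed
  finally have e: "mmul (b * n3) (kron b b (Pmat n3) idm) (tunfold b (ctconjT n3 (tcpart X))) (s * b + i) j
      = cnj (qcpart (X j i s))" .
  have "(n3 - s) mod n3 = sl n3 (- int s)"
  proof -
    have "int ((n3 - s) mod n3) = (int n3 - int s) mod int n3" using s by (simp add: zmod_int of_nat_diff)
    also have "\<dots> = (- int s + int n3) mod int n3" by simp
    also have "\<dots> = (- int s) mod int n3" by (rule mod_add_self2)
    finally show ?thesis unfolding sl_def by simp
  qed
  then show ?thesis
    unfolding qtconjT_def tfold_def e
    using i by (simp add: tunfold_def ctconjT_def tdpart_def r conj_entry_q)
qed

lemma conj_bcz:
  assumes a: "0 < a" and b: "0 < b" and n3: "0 < n3" and r: "r < b * n3" and c: "c < a * n3"
  shows "bcirc_z b a n3 (qtconjT b n3 X) r c = qconj (bcirc_z a b n3 X c r)"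
proof -
  have i: "r mod b < b" using b by simp
  have sl1: "sl n3 (int (r div b) - int (c div a)) < n3" "sl n3 (int (r div b) + int (c div a)) < n3"
    using sl_lt[OF n3] by auto
  show ?thesis
    unfolding bcirc_z_entry[OF a n3 c] bcirc_z_entry[OF b n3 r]
    unfolding conj_entry[OF b n3 i sl1(1)] conj_entry[OF b n3 i sl1(2)]
    using n3 by (simp add: Dq_add Cq_add qconj_add Dq_conj Cq_conj sl_red add.commute)
qed

lemma first_col:
  assumes b: "0 < b" and n3: "0 < n3" and i: "i < a" and j: "j < b" and s: "s < n3"
  shows "bcirc_z a b n3 X (s * a + i) j = X i j s"
proof -
  have "b \<le> b * n3" using n3 by simp
  then have "j < b * n3" using j by linarith
  then show ?thesis unfolding bcirc_z_entry[OF b n3 \<open>j < b * n3\<close>]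
    using i j s by (simp add: sl_int DC_split)
qed



lemma qt_distr:
  "qtprod n1 m n2 n3 A (\<lambda>i' j' s'. B i' j' s' + C i' j' s') i j s
      = qtprod n1 m n2 n3 A B i j s + qtprod n1 m n2 n3 A C i j s"
  by (simp add: qtprod_def tfold_def mmul_def tunfold_def distrib_left sum.distrib)

lemma lt_mult: "j < (a::nat) \<Longrightarrow> 0 < n3 \<Longrightarrow> j < a * n3"
proof -
  assume "j < a" "0 < n3"
  then have "a \<le> a * n3" by simp
  then show ?thesis using \<open>j < a\<close> by linarith
qed

lemma tfold_back: "0 < m \<Longrightarrow> tfold m M (l mod m) j (l div m) = M l j"
  unfolding tfold_def by (simp add: mult.commute)

lemma qt_assoc:
  assumes n1: "0 < n1" and m: "0 < m" and n2: "0 < n2" and n3: "0 < n3" and n: "0 < n"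
    and i: "i < n1" and s: "s < n3"
  shows "qtprod n1 n2 n n3 (qtprod n1 m n2 n3 A B) C i j s = qtprod n1 m n n3 A (qtprod m n2 n n3 B C) i j s"
proof -
  have r: "s*n1+i < n1*n3" by (rule idx_lt[OF s i])
  have "qtprod n1 n2 n n3 (qtprod n1 m n2 n3 A B) C i j s
     = (\<Sum>l<n2*n3. bcirc_z n1 n2 n3 (qtprod n1 m n2 n3 A B) (s*n1+i) l * C (l mod n2) j (l div n2))"
    unfolding qtprod_def[of n1 n2 n n3] tfold_def mmul_def tunfold_def by simp
  also have "\<dots> = (\<Sum>l<n2*n3. (\<Sum>l'<m*n3. bcirc_z n1 m n3 A (s*n1+i) l' * bcirc_z m n2 n3 B l' l) * C (l mod n2) j (l div n2))"
    by (intro sum.cong refl) (simp add: bcz_prod[OF n1 m n2 n3 r] mmul_def)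
  also have "\<dots> = (\<Sum>l'<m*n3. bcirc_z n1 m n3 A (s*n1+i) l' * (\<Sum>l<n2*n3. bcirc_z m n2 n3 B l' l * C (l mod n2) j (l div n2)))"
    by (simp add: sum_distrib_left sum_distrib_right mult.assoc sum.swap[of _ "{..<n2*n3}"])
  also have "\<dots> = qtprod n1 m n n3 A (qtprod m n2 n n3 B C) i j s"
    unfolding qtprod_def[of n1 m n n3] tfold_def[of n1] mmul_def tunfold_def
    by (simp add: qtprod_def tfold_back[OF m] mmul_def tunfold_def)
  finally show ?thesis .
qed

lemma qt_conj_prod:
  assumes n1: "0 < n1" and m: "0 < m" and n2: "0 < n2" and n3: "0 < n3"
    and i: "i < n2" and j: "j < n1" and s: "s < n3"
  shows "qtconjT n2 n3 (qtprod n1 m n2 n3 A B) i j s = qtprod n2 m n1 n3 (qtconjT n2 n3 B) (qtconjT m n3 A) i j s"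
proof -
  have r: "s*n2+i < n2*n3" by (rule idx_lt[OF s i])
  have jj: "j < n1*n3" by (rule lt_mult[OF j n3])
  have "qtconjT n2 n3 (qtprod n1 m n2 n3 A B) i j s
      = bcirc_z n2 n1 n3 (qtconjT n2 n3 (qtprod n1 m n2 n3 A B)) (s*n2+i) j"
    by (rule first_col[OF n1 n3 i j s, symmetric])
  also have "\<dots> = qconj (bcirc_z n1 n2 n3 (qtprod n1 m n2 n3 A B) j (s*n2+i))"
    by (rule conj_bcz[OF n1 n2 n3 r jj])
  also have "\<dots> = qconj (mmul (m*n3) (bcirc_z n1 m n3 A) (bcirc_z m n2 n3 B) j (s*n2+i))"
    by (simp add: bcz_prod[OF n1 m n2 n3 jj r])
  also have "\<dots> = (\<Sum>l<m*n3. qconj (bcirc_z m n2 n3 B l (s*n2+i)) * qconj (bcirc_z n1 m n3 A j l))"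
    by (simp add: mmul_def qconj_sum qconj_mult)
  also have "\<dots> = (\<Sum>l<m*n3. bcirc_z n2 m n3 (qtconjT n2 n3 B) (s*n2+i) l * bcirc_z m n1 n3 (qtconjT m n3 A) l j)"
    by (intro sum.cong refl) (simp add: conj_bcz[OF m n2 n3 r] conj_bcz[OF n1 m n3 _ jj])
  also have "\<dots> = qtprod n2 m n1 n3 (qtconjT n2 n3 B) (qtconjT m n3 A) i j s"
  proof -
    have "\<And>l. l < m*n3 \<Longrightarrow> qtconjT m n3 A (l mod m) j (l div m) = bcirc_z m n1 n3 (qtconjT m n3 A) l j"
    proof -
      fix l assume l: "l < m*n3"
      have "l div m < n3" using l by (simp add: less_mult_imp_div_less mult.commute)
      then have "bcirc_z m n1 n3 (qtconjT m n3 A) ((l div m)*m + l mod m) j = qtconjT m n3 A (l mod m) j (l div m)"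
        using first_col[OF n1 n3 _ j, of "l mod m" m "l div m"] m by simp
      then show "qtconjT m n3 A (l mod m) j (l div m) = bcirc_z m n1 n3 (qtconjT m n3 A) l j"
        by (simp add: mult.commute)
    qed
    then show ?thesis
      unfolding qtprod_def tfold_def mmul_def tunfold_def using i by simp
  qed
  finally show ?thesis .
qed



definition qv :: "quat \<Rightarrow> nat \<Rightarrow> real" where
  "qv a k = (if k = 0 then qre a else if k = 1 then qi a else if k = 2 then qj_c a else qk a)"

lemma qabs_L2: "qabs a = L2_set (qv a) {..<4}"
  by (simp add: qabs_def L2_set_def qv_def numeral_eq_Suc lessThan_Suc algebra_simps)

lemma qabs_nonneg[simp]: "0 \<le> qabs a" by (simp add: qabs_def)

lemma qabs_zero[simp]: "qabs 0 = 0" by (simp add: qabs_def)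

lemma qabs_eq_0: "qabs a = 0 \<longleftrightarrow> a = 0"
proof
  assume "qabs a = 0"
  then have "(qre a)\<^sup>2 + (qi a)\<^sup>2 + (qj_c a)\<^sup>2 + (qk a)\<^sup>2 = 0" by (simp add: qabs_def)
  then have "(qre a)\<^sup>2 = 0" "(qi a)\<^sup>2 = 0" "(qj_c a)\<^sup>2 = 0" "(qk a)\<^sup>2 = 0"
    by (smt (verit) zero_le_power2)+
  then have "qre a = 0" "qi a = 0" "qj_c a = 0" "qk a = 0" by simp_all
  then show "a = 0" by (intro quat_eqI) simp_all
qed simp

lemma qabs_triangle: "qabs (a + b) \<le> qabs a + qabs b"
proof -
  have "qv (a + b) = (\<lambda>k. qv a k + qv b k)" by (auto simp: qv_def)
  then show ?thesis unfolding qabs_L2 using L2_set_triangle_ineq by metis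
qed

lemma qabs_sum: "qabs (sum f A) \<le> (\<Sum>x\<in>A. qabs (f x))"
proof (induction A rule: infinite_finite_induct)
  case (insert x F)
  then show ?case using qabs_triangle[of "f x" "sum f F"] by simp
qed simp_all

lemma qabs_mult: "qabs (a * b) = qabs a * qabs b"
proof -
  have "(qre (a*b))\<^sup>2 + (qi (a*b))\<^sup>2 + (qj_c (a*b))\<^sup>2 + (qk (a*b))\<^sup>2
     = ((qre a)\<^sup>2 + (qi a)\<^sup>2 + (qj_c a)\<^sup>2 + (qk a)\<^sup>2) * ((qre b)\<^sup>2 + (qi b)\<^sup>2 + (qj_c b)\<^sup>2 + (qk b)\<^sup>2)"
    by (simp add: power2_eq_square algebra_simps)
  then show ?thesis unfolding qabs_def by (simp add: real_sqrt_mult)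
qed

definition qr :: "real \<Rightarrow> quat" where "qr c = Quat c 0 0 0"

lemma qabs_qr: "qabs (qr c) = \<bar>c\<bar>" by (simp add: qabs_def qr_def)
lemma qr_comm: "qr c * a = a * qr c" by (rule quat_eqI) (simp_all add: qr_def)

lemma vnorm_L2: "vnorm n x = L2_set (\<lambda>i. qabs (x i)) {..<n}"
  by (simp add: vnorm_def L2_set_def)

lemma vnorm_nonneg: "0 \<le> vnorm n x" by (simp add: vnorm_L2)

lemma vnorm_cong: "(\<And>i. i < n \<Longrightarrow> x i = y i) \<Longrightarrow> vnorm n x = vnorm n y"
  unfolding vnorm_def by (intro arg_cong[where f=sqrt] sum.cong) auto

lemma vnorm_eq_0: "vnorm n x = 0 \<longleftrightarrow> (\<forall>i<n. x i = 0)"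
  unfolding vnorm_L2 by (auto simp: L2_set_eq_0_iff qabs_eq_0)

lemma vnorm_scale: "vnorm n (\<lambda>i. x i * c) = vnorm n x * qabs c"
  unfolding vnorm_L2 qabs_mult using L2_set_left_distrib[of "qabs c" "\<lambda>i. qabs (x i)" "{..<n}"]
  by (simp add: mult.commute)

lemma mvmul_scale: "mvmul n M (\<lambda>i. x i * c) i = mvmul n M x i * c"
  by (simp add: mvmul_def sum_distrib_right mult.assoc)

lemma mvmul_mmul: "mvmul n (mmul k M N) x i = mvmul k M (mvmul n N x) i"
  by (simp add: mvmul_def mmul_def sum_distrib_left sum_distrib_right mult.assoc sum.swap[of _ "{..<k}"])

lemma mvmul_bound:
  "vnorm m (mvmul n M x) \<le> L2_set (\<lambda>i. L2_set (\<lambda>l. qabs (M i l)) {..<n}) {..<m} * vnorm n x"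
proof -
  have "\<And>i. qabs (mvmul n M x i) \<le> L2_set (\<lambda>l. qabs (M i l)) {..<n} * vnorm n x"
  proof -
    fix i
    have "qabs (mvmul n M x i) \<le> (\<Sum>l<n. qabs (M i l) * qabs (x l))"
      unfolding mvmul_def using qabs_sum by (metis (no_types, lifting) qabs_mult sum.cong)
    also have "\<dots> = (\<Sum>l<n. \<bar>qabs (M i l)\<bar> * \<bar>qabs (x l)\<bar>)" by simp
    also have "\<dots> \<le> L2_set (\<lambda>l. qabs (M i l)) {..<n} * vnorm n x"
      unfolding vnorm_L2 by (rule L2_set_mult_ineq)
    finally show "qabs (mvmul n M x i) \<le> L2_set (\<lambda>l. qabs (M i l)) {..<n} * vnorm n x" .
  qed
  then have "vnorm m (mvmul n M x) \<le> L2_set (\<lambda>i. L2_set (\<lambda>l. qabs (M i l)) {..<n} * vnorm n x) {..<m}"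
    unfolding vnorm_L2 by (intro L2_set_mono) auto
  also have "\<dots> = L2_set (\<lambda>i. L2_set (\<lambda>l. qabs (M i l)) {..<n}) {..<m} * vnorm n x"
    by (rule L2_set_left_distrib[OF vnorm_nonneg, symmetric])
  finally show ?thesis .
qed

definition e0 :: "nat \<Rightarrow> quat" where "e0 = (\<lambda>i. if i = 0 then 1 else 0)"

lemma vnorm_e0: "0 < n \<Longrightarrow> vnorm n e0 = 1"
proof -
  assume n: "0 < n"
  have "(\<Sum>i<n. (qabs (e0 i))\<^sup>2) = (qabs (e0 0))\<^sup>2"
    by (rule sum_single) (use n in \<open>auto simp: e0_def\<close>)
  then show ?thesis by (simp add: vnorm_def e0_def qabs_def one_quat_def)
qed

lemma spec_set_bdd: "bdd_above {vnorm m (mvmul n M x) | x. vnorm n x = 1}"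
proof (rule bdd_aboveI[where M="L2_set (\<lambda>i. L2_set (\<lambda>l. qabs (M i l)) {..<n}) {..<m}"])
  fix y assume "y \<in> {vnorm m (mvmul n M x) | x. vnorm n x = 1}"
  then obtain x where "y = vnorm m (mvmul n M x)" "vnorm n x = 1" by blast
  then show "y \<le> L2_set (\<lambda>i. L2_set (\<lambda>l. qabs (M i l)) {..<n}) {..<m}"
    using mvmul_bound[of m n M x] by simp
qed

lemma spec_upper: "vnorm n x = 1 \<Longrightarrow> vnorm m (mvmul n M x) \<le> spec_norm m n M"
  unfolding spec_norm_def by (rule cSup_upper[OF _ spec_set_bdd]) blast

lemma spec_nonneg: "0 < n \<Longrightarrow> 0 \<le> spec_norm m n M"
  using spec_upper[OF vnorm_e0, of n m M] vnorm_nonneg by (meson order_trans)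

lemma spec_least: "0 < n \<Longrightarrow> (\<And>x. vnorm n x = 1 \<Longrightarrow> vnorm m (mvmul n M x) \<le> K) \<Longrightarrow> spec_norm m n M \<le> K"
  unfolding spec_norm_def by (rule cSup_least) (use vnorm_e0 in blast, blast)

lemma spec_bound:
  assumes n: "0 < n"
  shows "vnorm m (mvmul n M x) \<le> spec_norm m n M * vnorm n x"
proof (cases "vnorm n x = 0")
  case True
  then have "\<forall>i<n. x i = 0" by (simp add: vnorm_eq_0)
  then have "\<forall>i. mvmul n M x i = 0" by (simp add: mvmul_def)
  then have "vnorm m (mvmul n M x) = 0" by (simp add: vnorm_def)
  then show ?thesis using True by simp
next
  case False
  define v where "v = vnorm n x"
  have v: "0 < v" using False vnorm_nonneg unfolding v_def by (metis order_le_less)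
  define y where "y = (\<lambda>i. x i * qr (1/v))"
  have "vnorm n y = 1" unfolding y_def vnorm_scale qabs_qr v_def[symmetric] using v by simp
  then have "vnorm m (mvmul n M y) \<le> spec_norm m n M" by (rule spec_upper)
  moreover have "vnorm m (mvmul n M y) = vnorm m (mvmul n M x) / v"
    unfolding y_def mvmul_scale[abs_def] vnorm_scale qabs_qr using v by simp
  ultimately show ?thesis using v unfolding v_def[symmetric] by (simp add: divide_le_eq)
qed

lemma spec_cong:
  assumes "\<And>r c. r < m \<Longrightarrow> c < n \<Longrightarrow> M r c = N r c"
  shows "spec_norm m n M = spec_norm m n N"
proof -
  have "\<And>x. vnorm m (mvmul n M x) = vnorm m (mvmul n N x)"
    by (rule vnorm_cong) (simp add: mvmul_def assms)
  then show ?thesis unfolding spec_norm_def by simp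
qed

lemma spec_submult:
  assumes b: "0 < b" and c: "0 < c"
  shows "spec_norm a c (mmul b M N) \<le> spec_norm a b M * spec_norm b c N"
proof (rule spec_least[OF c])
  fix x assume x: "vnorm c x = 1"
  have "vnorm a (mvmul c (mmul b M N) x) = vnorm a (mvmul b M (mvmul c N x))"
    unfolding mvmul_mmul[abs_def] ..
  also have "\<dots> \<le> spec_norm a b M * vnorm b (mvmul c N x)" by (rule spec_bound[OF b])
  also have "\<dots> \<le> spec_norm a b M * (spec_norm b c N * vnorm c x)"
    by (rule mult_left_mono[OF spec_bound[OF c] spec_nonneg[OF b]])
  finally show "vnorm a (mvmul c (mmul b M N) x) \<le> spec_norm a b M * spec_norm b c N" using x by simp
qed

lemma eig_le_spec:
  assumes n: "0 < n" and e: "right_eigenvalue n M lam"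
  shows "qabs lam \<le> spec_norm n n M"
proof -
  obtain x where x: "\<exists>i<n. x i \<noteq> 0" "\<forall>i<n. mvmul n M x i = x i * lam"
    using e unfolding right_eigenvalue_def by blast
  have v: "0 < vnorm n x" using x(1) vnorm_eq_0[of n x] vnorm_nonneg[of n x] by force
  have "vnorm n (mvmul n M x) = vnorm n (\<lambda>i. x i * lam)" by (rule vnorm_cong) (simp add: x(2))
  then have "vnorm n x * qabs lam \<le> spec_norm n n M * vnorm n x"
    using spec_bound[OF n, of n M x] vnorm_scale by simp
  then show ?thesis using v by (simp add: mult.commute)
qed



lemma quat_cmul: "a * (of_cplx u + qunit_j * of_cplx w) = of_cplx (qdpart a * u - cnj (qcpart a) * w) + qunit_j * of_cplx (qcpart a * u + cnj (qdpart a) * w)"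
  by (rule quat_eqI) (simp_all add: of_cplx_def qunit_j_def qdpart_def qcpart_def algebra_simps)

lemma quat_cmul2: "(of_cplx u + qunit_j * of_cplx w) * of_cplx k = of_cplx (u*k) + qunit_j * of_cplx (w*k)"
  by (rule quat_eqI) (simp_all add: of_cplx_def qunit_j_def algebra_simps)

lemma of_cplx_add: "of_cplx (u + w) = of_cplx u + of_cplx w"
  by (rule quat_eqI) (simp_all add: of_cplx_def)

lemma of_cplx_zero: "of_cplx 0 = 0" by (simp add: of_cplx_def zero_quat_def)

lemma of_cplx_sum: "of_cplx (sum f A) = (\<Sum>x\<in>A. of_cplx (f x))"
  by (induction A rule: infinite_finite_induct) (simp_all add: of_cplx_add of_cplx_zero)

lemma quat_c_zero: "of_cplx u + qunit_j * of_cplx w = 0 \<Longrightarrow> u = 0 \<and> w = 0"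
proof -
  assume h: "of_cplx u + qunit_j * of_cplx w = 0"
  have "qre (of_cplx u + qunit_j * of_cplx w) = 0" "qi (of_cplx u + qunit_j * of_cplx w) = 0"
    "qj_c (of_cplx u + qunit_j * of_cplx w) = 0" "qk (of_cplx u + qunit_j * of_cplx w) = 0"
    using h by simp_all
  then show ?thesis by (simp add: of_cplx_def qunit_j_def complex_eq_iff)
qed

lemma sum_2n: fixes n :: nat shows "(\<Sum>c<n+n. g c) = (\<Sum>l<n. g l) + (\<Sum>l<n. g (l+n))"
proof -
  have "(\<Sum>c<n+n. g c) = (\<Sum>l<n. g l) + (\<Sum>c\<in>{n..<n+n}. g c)"
  proof -
    have "{..<n+n} = {..<n} \<union> {n..<n+n}" by auto
    moreover have "sum g ({..<n} \<union> {n..<n+n}) = sum g {..<n} + sum g {n..<n+n}"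
      by (rule sum.union_disjoint) auto
    ultimately show ?thesis by simp
  qed
  also have "(\<Sum>c\<in>{n..<n+n}. g c) = (\<Sum>l<n. g (l+n))"
    using sum.shift_bounds_nat_ivl[of g 0 n n] by (simp add: atLeast0LessThan)
  finally show ?thesis .
qed

lemma eig_exists:
  assumes n: "0 < n"
  shows "\<exists>lam. right_eigenvalue n M lam"
proof -
  define X :: "complex Matrix.mat" where "X = Matrix.mat (n+n) (n+n) (\<lambda>(r,c).
     if r < n then (if c < n then qdpart (M r c) else - cnj (qcpart (M r (c-n))))
     else (if c < n then qcpart (M (r-n) c) else cnj (qdpart (M (r-n) (c-n)))))"
  have Xc: "X \<in> carrier_mat (n+n) (n+n)" unfolding X_def by simp
  obtain k where "k \<in> spectrum X" using spectrum_non_empty[OF Xc] n by auto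
  then have "eigenvalue X k" by (simp add: spectrum_def)
  then obtain v where "eigenvector X v k" unfolding eigenvalue_def by blast
  then have v: "v \<in> carrier_vec (n+n)" "v \<noteq> 0\<^sub>v (n+n)" "X *\<^sub>v v = k \<cdot>\<^sub>v v"
    unfolding eigenvector_def using Xc by auto
  have dv: "dim_vec v = n+n" using v(1) by simp
  have row_eq: "(\<Sum>c<n+n. X $$ (r,c) * vec_index v c) = k * vec_index v r" if r: "r < n+n" for r
  proof -
    have "vec_index (X *\<^sub>v v) r = vec_index (k \<cdot>\<^sub>v v) r" using v(3) by simp
    then show ?thesis using r Xc dv by (simp add: scalar_prod_def atLeast0LessThan)
  qed
  define x where "x i = of_cplx (vec_index v i) + qunit_j * of_cplx (vec_index v (i+n))" for i
  have "right_eigenvalue n M (of_cplx k)"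
    unfolding right_eigenvalue_def
  proof (rule exI[of _ x], intro conjI allI impI)
    have "\<exists>c<n+n. vec_index v c \<noteq> 0"
    proof (rule ccontr)
      assume "\<not> (\<exists>c<n+n. vec_index v c \<noteq> 0)"
      then have "v = 0\<^sub>v (n+n)" by (intro eq_vecI) (auto simp: dv)
      with v(2) show False by simp
    qed
    then obtain c where c: "c < n+n" "vec_index v c \<noteq> 0" by blast
    show "\<exists>i<n. x i \<noteq> 0"
    proof (cases "c < n")
      case True
      have "x c \<noteq> 0"
      proof
        assume "x c = 0"
        then have "vec_index v c = 0" using quat_c_zero[of "vec_index v c" "vec_index v (c+n)"] unfolding x_def by simp
        then show False using c by simp
      qed
      then show ?thesis using True by blast
    next
      case False
      then have "c - n < n" "c - n + n = c" using c by auto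
      have "x (c - n) \<noteq> 0"
      proof
        assume "x (c - n) = 0"
        then have "vec_index v (c - n + n) = 0" using quat_c_zero[of "vec_index v (c - n)" "vec_index v (c-n+n)"] unfolding x_def by simp
        then show False using c \<open>c - n + n = c\<close> by simp
      qed
      then show ?thesis using \<open>c - n < n\<close> by blast
    qed
  next
    fix i assume i: "i < n"
    have e1: "(\<Sum>l<n. qdpart (M i l) * vec_index v l - cnj (qcpart (M i l)) * vec_index v (l+n)) = k * vec_index v i"
      using row_eq[of i] i unfolding sum_2n X_def by (simp add: sum_subtractf sum_negf)
    have e2: "(\<Sum>l<n. qcpart (M i l) * vec_index v l + cnj (qdpart (M i l)) * vec_index v (l+n)) = k * vec_index v (i+n)"
      using row_eq[of "i+n"] i unfolding sum_2n X_def by (simp add: sum.distrib)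
    have "mvmul n M x i = (\<Sum>l<n. of_cplx (qdpart (M i l) * vec_index v l - cnj (qcpart (M i l)) * vec_index v (l+n))
        + qunit_j * of_cplx (qcpart (M i l) * vec_index v l + cnj (qdpart (M i l)) * vec_index v (l+n)))"
      unfolding mvmul_def x_def quat_cmul ..
    also have "\<dots> = of_cplx (k * vec_index v i) + qunit_j * of_cplx (k * vec_index v (i+n))"
    proof -
      have f1: "of_cplx (k * vec_index v i) = (\<Sum>l<n. of_cplx (qdpart (M i l) * vec_index v l - cnj (qcpart (M i l)) * vec_index v (l+n)))"
        by (simp only: e1[symmetric] of_cplx_sum)
      have f2: "qunit_j * of_cplx (k * vec_index v (i+n)) = (\<Sum>l<n. qunit_j * of_cplx (qcpart (M i l) * vec_index v l + cnj (qdpart (M i l)) * vec_index v (l+n)))"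
        by (simp only: e2[symmetric] of_cplx_sum sum_distrib_left)
      show ?thesis by (simp only: f1 f2 sum.distrib)
    qed
    also have "\<dots> = x i * of_cplx k" unfolding x_def quat_cmul2 by (simp add: mult.commute)
    finally show "mvmul n M x i = x i * of_cplx k" .
  qed
  then show ?thesis ..
qed



theorem lemma2p15:
  fixes A B :: "quat tens" and n1 m n2 n3 :: nat
  assumes "0 < n1" and "0 < m" and "0 < n2" and "0 < n3"
  shows
   "(n1 = m \<longrightarrow> qt_radius m n3 A \<le> qt_norm n1 m n3 A)
  \<and> qt_norm n1 n2 n3 (qtprod n1 m n2 n3 A B) \<le> qt_norm n1 m n3 A * qt_norm m n2 n3 B
  \<and> (\<forall>i<n2. \<forall>j<n1. \<forall>s<n3.
        qtconjT n2 n3 (qtprod n1 m n2 n3 A B) i j s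
      = qtprod n2 m n1 n3 (qtconjT n2 n3 B) (qtconjT m n3 A) i j s)
  \<and> (\<forall>(C :: quat tens) (n :: nat). 0 < n \<longrightarrow> (\<forall>i<n1. \<forall>j<n. \<forall>s<n3.
        qtprod n1 n2 n n3 (qtprod n1 m n2 n3 A B) C i j s
      = qtprod n1 m n n3 A (qtprod m n2 n n3 B C) i j s))
  \<and> (\<forall>C :: quat tens. \<forall>i<n1. \<forall>j<n2. \<forall>s<n3.
        qtprod n1 m n2 n3 A (\<lambda>i' j' s'. B i' j' s' + C i' j' s') i j s
      = qtprod n1 m n2 n3 A B i j s + qtprod n1 m n2 n3 A C i j s)"
proof -
  note n1 = assms(1) and m = assms(2) and n2 = assms(3) and n3 = assms(4)
  have mn3: "0 < m * n3" and n2n3: "0 < n2 * n3" using m n2 n3 by simp_all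
  have P1: "n1 = m \<longrightarrow> qt_radius m n3 A \<le> qt_norm n1 m n3 A"
  proof
    assume e: "n1 = m"
    have "spec_radius (m * n3) (bcirc_z m m n3 A) \<le> spec_norm (m * n3) (m * n3) (bcirc_z m m n3 A)"
      unfolding spec_radius_def
    proof (rule cSup_least)
      show "{qabs lam |lam. right_eigenvalue (m * n3) (bcirc_z m m n3 A) lam} \<noteq> {}"
        using eig_exists[OF mn3, of "bcirc_z m m n3 A"] by blast
    next
      fix y assume "y \<in> {qabs lam |lam. right_eigenvalue (m * n3) (bcirc_z m m n3 A) lam}"
      then show "y \<le> spec_norm (m * n3) (m * n3) (bcirc_z m m n3 A)"
        using eig_le_spec[OF mn3] by blast
    qed
    then show "qt_radius m n3 A \<le> qt_norm n1 m n3 A"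
      unfolding qt_radius_def qt_norm_def e .
  qed
  have "qt_norm n1 n2 n3 (qtprod n1 m n2 n3 A B)
      = spec_norm (n1 * n3) (n2 * n3) (mmul (m * n3) (bcirc_z n1 m n3 A) (bcirc_z m n2 n3 B))"
    unfolding qt_norm_def by (rule spec_cong) (rule bcz_prod[OF n1 m n2 n3])
  also have "\<dots> \<le> qt_norm n1 m n3 A * qt_norm m n2 n3 B"
    unfolding qt_norm_def by (rule spec_submult[OF mn3 n2n3])
  finally have P2: "qt_norm n1 n2 n3 (qtprod n1 m n2 n3 A B) \<le> qt_norm n1 m n3 A * qt_norm m n2 n3 B" .
  have P3: "\<forall>i<n2. \<forall>j<n1. \<forall>s<n3.
        qtconjT n2 n3 (qtprod n1 m n2 n3 A B) i j s
      = qtprod n2 m n1 n3 (qtconjT n2 n3 B) (qtconjT m n3 A) i j s"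
    using qt_conj_prod[OF n1 m n2 n3] by blast
  have P4: "\<forall>(C :: quat tens) (n :: nat). 0 < n \<longrightarrow> (\<forall>i<n1. \<forall>j<n. \<forall>s<n3.
        qtprod n1 n2 n n3 (qtprod n1 m n2 n3 A B) C i j s
      = qtprod n1 m n n3 A (qtprod m n2 n n3 B C) i j s)"
    using qt_assoc[OF n1 m n2 n3] by blast
  have P5: "\<forall>C :: quat tens. \<forall>i<n1. \<forall>j<n2. \<forall>s<n3.
        qtprod n1 m n2 n3 A (\<lambda>i' j' s'. B i' j' s' + C i' j' s') i j s
      = qtprod n1 m n2 n3 A B i j s + qtprod n1 m n2 n3 A C i j s"
    using qt_distr by blast
  show ?thesis using P1 P2 P3 P4 P5 by blast
qed


end
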